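(* Let $r$ be a positive odd integer and $x\in\mathbb{I}$. Then: (i) $y_1(x)\le\frac1r$ if and only if $d_1(x)\ge r$. (ii) If $n\ge2$ and $\epsilon_n(x)=\epsilon_{n-1}(x)$ (i.e. $s_{n-1}(x)=1$), then $y_n(x)\le\frac1r$ if and only if $d_n(x)\ge r(d_{n-1}(x)-1)$. (iii) If $n\ge2$ and $\epsilon_n(x)=-\epsilon_{n-1}(x)$ (i.e. $s_{n-1}(x)=-1$), then $y_n(x)\le\frac1r$ if and only if $d_n(x)\ge r(d_{n-1}(x)+1)$.
   Context: $\mathbb{I}=(0,1)\setminus\mathbb{Q}$. Define $T\colon[0,1)\to[0,1)$ by: for $k\in\mathbb{N}$, $Tx=\lceil 1/x\rceil x-1$ if $x\in(\frac{1}{2k},\frac{1}{2k-1})$; $Tx=1-\lfloor 1/x\rfloor x$ if $x\in(\frac{1}{2k+1},\frac{1}{2k})$; $Tx=0$ if $x\in\{0\}\cup\{1/n\colon n\ge 2\}$. For $x\in(0,1)$ define $d_1(x)=\lceil 1/x\rceil$, $s_1(x)=1$ if $x\in[\frac{1}{2k},\frac{1}{2k-1})$ for some $k$, and $d_1(x)=\lfloor 1/x\rfloor$, $s_1(x)=-1$ if $x\in[\frac{1}{2k+1},\frac{1}{2k})$ for some $k$; $d_{n+1}(x)=d_1(T^nx)$, $s_{n+1}(x)=s_1(T^nx)$, $\epsilon_1(x)=1$, $\epsilon_{n+1}(x)=\prod_{k=1}^ns_k(x)$. For $x\in\mathbb{I}$ define $y_1(x)=x$ and, for $n\ge2$, $y_n(x)=(d_{n-1}(x)-1)T^{n-1}x$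 if $\epsilon_n(x)=\epsilon_{n-1}(x)$, and $y_n(x)=(d_{n-1}(x)+1)T^{n-1}x$ if $\epsilon_n(x)=-\epsilon_{n-1}(x)$. *)

theory Defs
  imports Complex_Main
begin

text \<open>The map T on [0,1) (extended by 0 outside, irrelevant for irrational x in (0,1)).\<close>
definition T :: "real \<Rightarrow> real" where
  "T x = (if \<exists>k::nat. k \<ge> 1 \<and> 1 / real (2*k) < x \<and> x < 1 / real (2*k - 1)
          then real_of_int \<lceil>1 / x\<rceil> * x - 1
          else if \<exists>k::nat. k \<ge> 1 \<and> 1 / real (2*k + 1) < x \<and> x < 1 / real (2*k)
          then 1 - real_of_int \<lfloor>1 / x\<rfloor> * x
          else 0)"

definition in_pos_interval :: "real \<Rightarrow> bool" where
  "in_pos_interval x \<longleftrightarrow> (\<exists>k::nat. k \<ge> 1 \<and> 1 / real (2*k) \<le> x \<and> x < 1 / real (2*k - 1))"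

definition d1 :: "real \<Rightarrow> int" where
  "d1 x = (if in_pos_interval x then \<lceil>1 / x\<rceil> else \<lfloor>1 / x\<rfloor>)"

definition s1 :: "real \<Rightarrow> int" where
  "s1 x = (if in_pos_interval x then 1 else -1)"

text \<open>Indices start at 1: d n x = d1 (T^(n-1) x), s n x = s1 (T^(n-1) x).\<close>
definition d :: "nat \<Rightarrow> real \<Rightarrow> int" where
  "d n x = d1 ((T ^^ (n - 1)) x)"

definition s :: "nat \<Rightarrow> real \<Rightarrow> int" where
  "s n x = s1 ((T ^^ (n - 1)) x)"

definition eps :: "nat \<Rightarrow> real \<Rightarrow> int" where
  "eps n x = (\<Prod>k = 1..<n. s k x)"

definition y :: "nat \<Rightarrow> real \<Rightarrow> real" where
  "y n x = (if n \<le> 1 then x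
            else if eps n x = eps (n - 1) x
                 then real_of_int (d (n - 1) x - 1) * (T ^^ (n - 1)) x
                 else real_of_int (d (n - 1) x + 1) * (T ^^ (n - 1)) x)"

end

theory Submission imports Defs begin

lemma basic:
  assumes x0: "0<x" and x1: "x<1" and xq: "x\<notin>\<rat>"
  shows "even (d1 x) \<and> d1 x \<ge> 2 \<and> real_of_int (d1 x) - 1 < 1/x \<and> 1/x < real_of_int (d1 x) + 1
         \<and> 0 < T x \<and> T x < 1 \<and> T x \<notin> \<rat>"
proof -
  define u where "u = 1/x"
  have xu: "x = 1/u" using x0 u_def by simp
  have u1: "u > 1" using x0 x1 u_def by simp
  have uq: "u \<notin> \<rat>" using xq xu by (metis Rats_1 Rats_divide)
  define m where "m = floor u"
  have mne: "u \<noteq> of_int m" using uq Rats_of_int by metis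
  have m1: "m < u" using mne m_def by (metis floor_le_iff order_le_less of_int_floor_le) 
  have m2: "u < m+1" using m_def by linarith
  have mge: "m \<ge> 1" using u1 m_def by linarith
  have ceil: "ceiling u = m+1" using m1 m2 by (intro ceiling_unique) auto
  show ?thesis
  proof (cases "odd m")
    case True
    define k where "k = nat ((m+1) div 2)"
    have k2: "int (2*k) = m+1" using True mge unfolding k_def by (auto elim!: oddE)
    have k1: "k \<ge> 1" using k2 mge by linarith
    have r2: "real (2*k) = m+1" using k2 by (metis of_int_of_nat_eq of_int_add of_int_1)
    have r1: "real (2*k-1) = m" using k2 k1 by (simp add: of_nat_diff)
    have xa: "1/real (2*k) < x" unfolding xu using r2 m2 mge u1 by (intro divide_strict_left_mono) auto
    have xb: "x < 1/real (2*k-1)" unfolding xu using r1 m1 mge u1 by (intro divide_strict_left_mono) auto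
    have pos: "in_pos_interval x" unfolding in_pos_interval_def using k1 xa xb by force
    have dd: "d1 x = m+1" using pos ceil u_def d1_def by simp
    have Tx: "T x = (m+1)*x - 1" unfolding T_def using k1 xa xb ceil u_def by auto
    have ux: "u*x = 1" using xu u1 by simp
    have "u*x < (m+1)*x" using m2 x0 by (intro mult_strict_right_mono) auto
    then have t0: "0 < T x" using Tx ux by simp
    have "m*x < u*x" using m1 x0 by (intro mult_strict_right_mono) auto
    then have t1: "T x < 1" using Tx ux x1 by (simp add: algebra_simps)
    have tq: "T x \<notin> \<rat>"
    proof
      assume "T x \<in> \<rat>"
      then have "(T x + 1) / (m+1) \<in> \<rat>" by (intro Rats_divide Rats_add) auto
      moreover have "(T x + 1) / (m+1) = x" using Tx mge by (simp add: field_simps)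
      ultimately show False using xq by simp
    qed
    show ?thesis using dd True t0 t1 tq m1 m2 mge u_def by auto
  next
    case False
    define k where "k = nat (m div 2)"
    have k2: "int (2*k) = m" using False mge unfolding k_def by (auto elim!: evenE)
    have k1: "k \<ge> 1" using k2 mge by linarith
    have r2: "real (2*k) = m" using k2 by (metis of_int_of_nat_eq)
    have r1: "real (2*k+1) = m+1" using r2 by simp
    have xa: "1/real (2*k+1) < x" unfolding xu using r1 m2 mge u1 by (intro divide_strict_left_mono) auto
    have xb: "x < 1/real (2*k)" unfolding xu using r2 m1 mge u1 by (intro divide_strict_left_mono) auto
    have npos: "\<not> in_pos_interval x"
    proof
      assume "in_pos_interval x"
      then obtain j::nat where j: "j \<ge> 1" "1 / real (2*j) \<le> x" "x < 1 / real (2*j-1)"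
        unfolding in_pos_interval_def by blast
      have ja: "real (2*j-1) = 2*real j - 1" using j(1) by (simp add: of_nat_diff)
      have "u \<le> 2*real j" using j(1) j(2) xu u1 by (simp add: field_simps)
      moreover have "2*real j - 1 < u" using j(3) ja xu u1 j(1) by (simp add: field_simps)
      ultimately have "m = 2*int j - 1 \<or> u = 2 * real j" using m_def by linarith
      moreover have "u \<noteq> 2 * real j" using uq by (metis Rats_of_nat Rats_mult Rats_number_of)
      ultimately show False using False by auto
    qed
    have dd: "d1 x = m" using npos m_def u_def d1_def by simp
    have nf: "\<not> (\<exists>k::nat. k \<ge> 1 \<and> 1 / real (2*k) < x \<and> x < 1 / real (2*k - 1))"
      using npos unfolding in_pos_interval_def by force
    have Tx: "T x = 1 - m*x" unfolding T_def using nf k1 xa xb m_def u_def by auto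
    have ux: "u*x = 1" using xu u1 by simp
    have "m*x < u*x" using m1 x0 by (intro mult_strict_right_mono) auto
    then have t0: "0 < T x" using Tx ux by simp
    have t1: "T x < 1" using Tx mge x0 by simp
    have tq: "T x \<notin> \<rat>"
    proof
      assume "T x \<in> \<rat>"
      then have "(1 - T x) / m \<in> \<rat>" by (intro Rats_divide Rats_diff) auto
      moreover have "(1 - T x) / m = x" using Tx mge by (simp add: field_simps)
      ultimately show False using xq by simp
    qed
    show ?thesis using dd False t0 t1 tq m1 m2 mge u_def by auto
  qed
qed

lemma iter:
  assumes "0<x" "x<1" "x\<notin>\<rat>"
  shows "0 < (T^^k) x \<and> (T^^k) x < 1 \<and> (T^^k) x \<notin> \<rat>"
  using assms by (induction k) (auto dest: basic)

lemma gen: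
  assumes w0: "0<w" and w1: "w<1" and wq: "w\<notin>\<rat>" and c0: "c > 0" and oc: "odd c"
    and r0: "r > 0" and orr: "odd r"
  shows "real_of_int c * w \<le> 1/real r \<longleftrightarrow> d1 w \<ge> int r * c"
proof -
  define N where "N = int r * c"
  have oN: "odd N" using oc orr N_def by simp
  have B: "even (d1 w) \<and> d1 w \<ge> 2 \<and> real_of_int (d1 w) - 1 < 1/w \<and> 1/w < real_of_int (d1 w) + 1"
    using basic[OF w0 w1 wq] by blast
  have uq: "1/w \<notin> \<rat>" proof assume h: "1/w \<in> \<rat>" have "1/(1/w) \<in> \<rat>" using Rats_divide[OF Rats_1 h] . then show False using wq by simp qed
  have ne: "1/w \<noteq> of_int N" using uq Rats_of_int by metis
  have "real_of_int c * w \<le> 1/real r \<longleftrightarrow> of_int N \<le> 1/w"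
    using w0 r0 c0 unfolding N_def by (simp add: field_simps)
  also have "\<dots> \<longleftrightarrow> of_int N < 1/w" using ne by auto
  also have "\<dots> \<longleftrightarrow> d1 w \<ge> N"
  proof
    assume "of_int N < 1/w"
    then have "N < d1 w + 1" using B by linarith
    then show "d1 w \<ge> N" by simp
  next
    assume "d1 w \<ge> N"
    moreover have "d1 w \<noteq> N" using B oN by auto
    ultimately have "d1 w \<ge> N + 1" by simp
    then show "of_int N < 1/w" using B by linarith
  qed
  finally show ?thesis unfolding N_def .
qed

lemma eps_step: "n \<ge> 2 \<Longrightarrow> eps n x = eps (n-1) x * s (n-1) x"
  unfolding eps_def by (cases n) (auto simp: prod.atLeastLessThan_Suc)

lemma eps_nz: "eps n x \<noteq> 0"
  unfolding eps_def s_def s1_def by (simp add: prod_zero_iff) 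

theorem lemma3p5:
  fixes r :: nat and x :: real
  assumes "r > 0" and "odd r"
    and "0 < x" and "x < 1" and "x \<notin> \<rat>"
  shows "(y 1 x \<le> 1 / real r \<longleftrightarrow> d 1 x \<ge> int r)
    \<and> (\<forall>n\<ge>2. eps n x = eps (n - 1) x \<longrightarrow>
          (y n x \<le> 1 / real r \<longleftrightarrow> d n x \<ge> int r * (d (n - 1) x - 1)))
    \<and> (\<forall>n\<ge>2. eps n x = - eps (n - 1) x \<longrightarrow>
          (y n x \<le> 1 / real r \<longleftrightarrow> d n x \<ge> int r * (d (n - 1) x + 1)))"
proof (intro conjI allI impI)
  show "y 1 x \<le> 1 / real r \<longleftrightarrow> d 1 x \<ge> int r"
    using gen[OF assms(3,4,5), of 1 r] assms(1,2) by (simp add: y_def d_def)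
next
  fix n :: nat
  assume n2: "n \<ge> 2"
  define z where "z = (T^^(n-2)) x"
  have Z: "0 < z \<and> z < 1 \<and> z \<notin> \<rat>" using iter[OF assms(3,4,5)] z_def by blast
  have A: "even (d1 z) \<and> d1 z \<ge> 2" using basic Z by blast
  have W: "0 < T z \<and> T z < 1 \<and> T z \<notin> \<rat>" using basic Z by blast
  have Tn: "(T^^(n-1)) x = T z" unfolding z_def using n2
    by (metis Suc_diff_Suc Suc_1 comp_apply funpow.simps(2) less_le_trans lessI numeral_2_eq_2 diff_Suc_1)
  have dn1: "d (n-1) x = d1 z" unfolding d_def z_def using n2 by (simp add: numeral_2_eq_2)
  have dn: "d n x = d1 (T z)" unfolding d_def using Tn by simp
  {
    assume e: "eps n x = eps (n - 1) x"
    have yy: "y n x = real_of_int (d1 z - 1) * T z" using e n2 Tn dn1 unfolding y_def by simp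
    show "y n x \<le> 1 / real r \<longleftrightarrow> d n x \<ge> int r * (d (n - 1) x - 1)"
      unfolding yy dn dn1 using gen[of "T z" "d1 z - 1" r] W A assms(1,2) by auto
  }
  {
    assume e: "eps n x = - eps (n - 1) x"
    have "eps n x \<noteq> eps (n-1) x" using e eps_nz[of n x] by auto
    then have yy: "y n x = real_of_int (d1 z + 1) * T z" using n2 Tn dn1 unfolding y_def by simp
    show "y n x \<le> 1 / real r \<longleftrightarrow> d n x \<ge> int r * (d (n - 1) x + 1)"
      unfolding yy dn dn1 using gen[of "T z" "d1 z + 1" r] W A assms(1,2) by auto
  }
qed

end
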